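(* Assume (A1)–(A2), let $r>0$, $\vec\xi\in\mathbb{R}^n$, $\beta:\mathrm{T}_r\to\mathbb{R}^n$ and $g:\mathrm{T}_r\to\mathbb{R}$ continuous, and let $u$ be a viscosity solution of $$\begin{cases}\mathcal{H}(x,Du-\vec\xi)F(D^2u)=0&\text{in }\mathrm{B}_r^+,\\ \beta\cdot Du=g(x)&\text{on }\mathrm{T}_r.\end{cases}$$ Then $u$ is also a viscosity solution of $$\begin{cases}F(D^2u)=0&\text{in }\mathrm{B}_r^+,\\ \beta\cdot Du=g(x)&\text{on }\mathrm{T}_r.\end{cases}$$
   Context: $\mathrm{B}_r^+=\mathrm{B}_r\cap\{x_n>0\}$, $\mathrm{T}_r=\{(x',0):|x'|<r\}$. $\mathcal{H}(x,\vec\zeta)=|\vec\zeta|^p+\mathfrak{a}(x)|\vec\zeta|^q$. (A1) $F:\mathrm{Sym}(n)\to\mathbb{R}$ satisfies $\mathcal{P}^-_{\lambda,\Lambda}(M-N)\le F(M)-F(N)\le\mathcal{P}^+_{\lambda,\Lambda}(M-N)$, $0<\lambda\le\Lambda$, $F(0)=0$, where for $M$ with eigenvalues $e_i$, $\mathcal{P}^+_{\lambda,\Lambda}(M)=\Lambda\sum_{e_i>0}e_i+\lambda\sum_{e_i<0}e_i$, $\mathcal{P}^-_{\lambda,\Lambda}(M)=\lambda\sum_{e_i>0}e_i+\Lambda\sum_{e_i<0}e_i$. (A2) $0<p\le q$, $\mathfrak{a}$ continuous and $\ge0$. Viscosity solutions: for $\varphi\in C^2$ touching $u$ from above (below) at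 $x_0$, the interior inequality $\ge(\le)$ for the equation holds if $x_0\in\mathrm{B}_r^+$, and $\beta(x_0)\cdot D\varphi(x_0)\ge(\le)g(x_0)$ if $x_0\in\mathrm{T}_r$. *)

theory Defs
  imports "HOL-Analysis.Analysis"
begin

definition sym_matrix :: "real^'n^'n \<Rightarrow> bool" where
  "sym_matrix M \<longleftrightarrow> transpose M = M"

definition diag_mat :: "real^'n \<Rightarrow> real^'n^'n" where
  "diag_mat e = (\<chi> i j. if i = j then e $ i else 0)"

text \<open>The eigenvalues (with multiplicity) of a symmetric M are the diagonal
  entries e of any spectral decomposition M = Q diag(e) Q^T, Q orthogonal.\<close>
definition pucci_plus :: "real \<Rightarrow> real \<Rightarrow> real^'n^'n \<Rightarrow> real" where
  "pucci_plus lam Lam M = (SOME s. \<exists>Q e. orthogonal_matrix Q \<and>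
      M = Q ** diag_mat e ** transpose Q \<and>
      s = Lam * (\<Sum>i\<in>{i. e $ i > 0}. e $ i) + lam * (\<Sum>i\<in>{i. e $ i < 0}. e $ i))"

definition pucci_minus :: "real \<Rightarrow> real \<Rightarrow> real^'n^'n \<Rightarrow> real" where
  "pucci_minus lam Lam M = (SOME s. \<exists>Q e. orthogonal_matrix Q \<and>
      M = Q ** diag_mat e ** transpose Q \<and>
      s = lam * (\<Sum>i\<in>{i. e $ i > 0}. e $ i) + Lam * (\<Sum>i\<in>{i. e $ i < 0}. e $ i))"

definition A1 :: "real \<Rightarrow> real \<Rightarrow> (real^'n^'n \<Rightarrow> real) \<Rightarrow> bool" where
  "A1 lam Lam F \<longleftrightarrow> 0 < lam \<and> lam \<le> Lam \<and> F 0 = 0 \<and>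
     (\<forall>M N. sym_matrix M \<longrightarrow> sym_matrix N \<longrightarrow>
        pucci_minus lam Lam (M - N) \<le> F M - F N \<and> F M - F N \<le> pucci_plus lam Lam (M - N))"

text \<open>The upper half ball and its flat boundary portion; the distinguished
  (``last'') coordinate is the index k.\<close>
definition half_ball :: "'n \<Rightarrow> real \<Rightarrow> (real^'n) set" where
  "half_ball k r = {x. norm x < r \<and> x $ k > 0}"

definition flat_part :: "'n \<Rightarrow> real \<Rightarrow> (real^'n) set" where
  "flat_part k r = {x. norm x < r \<and> x $ k = 0}"

definition Hfun :: "real \<Rightarrow> real \<Rightarrow> (real^'n \<Rightarrow> real) \<Rightarrow> real^'n \<Rightarrow> real^'n \<Rightarrow> real" where
  "Hfun p q a x z = norm z powr p + a x * norm z powr q"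

definition C2_on_with :: "(real^'n \<Rightarrow> real) \<Rightarrow> (real^'n \<Rightarrow> real^'n) \<Rightarrow> (real^'n \<Rightarrow> real^'n^'n)
    \<Rightarrow> (real^'n) set \<Rightarrow> bool" where
  "C2_on_with phi Dphi D2phi S \<longleftrightarrow> open S \<and>
     (\<forall>x\<in>S. (phi has_derivative (\<lambda>h. Dphi x \<bullet> h)) (at x)) \<and>
     (\<forall>x\<in>S. (Dphi has_derivative (\<lambda>h. D2phi x *v h)) (at x)) \<and>
     continuous_on S D2phi"

definition visc_sub :: "'n \<Rightarrow> real \<Rightarrow> (real^'n \<Rightarrow> real^'n \<Rightarrow> real^'n^'n \<Rightarrow> real)
    \<Rightarrow> (real^'n \<Rightarrow> real^'n) \<Rightarrow> (real^'n \<Rightarrow> real) \<Rightarrow> (real^'n \<Rightarrow> real) \<Rightarrow> bool" where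
  "visc_sub k r G beta g u \<longleftrightarrow>
     (\<forall>phi Dphi D2phi S x0. C2_on_with phi Dphi D2phi S \<and> x0 \<in> S \<and>
        x0 \<in> half_ball k r \<union> flat_part k r \<and> u x0 = phi x0 \<and>
        (\<forall>x \<in> S \<inter> (half_ball k r \<union> flat_part k r). u x \<le> phi x) \<longrightarrow>
        (x0 \<in> half_ball k r \<longrightarrow> G x0 (Dphi x0) (D2phi x0) \<ge> 0) \<and>
        (x0 \<in> flat_part k r \<longrightarrow> beta x0 \<bullet> Dphi x0 \<ge> g x0))"

definition visc_super :: "'n \<Rightarrow> real \<Rightarrow> (real^'n \<Rightarrow> real^'n \<Rightarrow> real^'n^'n \<Rightarrow> real)
    \<Rightarrow> (real^'n \<Rightarrow> real^'n) \<Rightarrow> (real^'n \<Rightarrow> real) \<Rightarrow> (real^'n \<Rightarrow> real) \<Rightarrow> bool" where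
  "visc_super k r G beta g u \<longleftrightarrow>
     (\<forall>phi Dphi D2phi S x0. C2_on_with phi Dphi D2phi S \<and> x0 \<in> S \<and>
        x0 \<in> half_ball k r \<union> flat_part k r \<and> u x0 = phi x0 \<and>
        (\<forall>x \<in> S \<inter> (half_ball k r \<union> flat_part k r). phi x \<le> u x) \<longrightarrow>
        (x0 \<in> half_ball k r \<longrightarrow> G x0 (Dphi x0) (D2phi x0) \<le> 0) \<and>
        (x0 \<in> flat_part k r \<longrightarrow> beta x0 \<bullet> Dphi x0 \<le> g x0))"

definition visc_sol :: "'n \<Rightarrow> real \<Rightarrow> (real^'n \<Rightarrow> real^'n \<Rightarrow> real^'n^'n \<Rightarrow> real)
    \<Rightarrow> (real^'n \<Rightarrow> real^'n) \<Rightarrow> (real^'n \<Rightarrow> real) \<Rightarrow> (real^'n \<Rightarrow> real) \<Rightarrow> bool" where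
  "visc_sol k r G beta g u \<longleftrightarrow>
     continuous_on (half_ball k r \<union> flat_part k r) u \<and>
     visc_sub k r G beta g u \<and> visc_super k r G beta g u"

end

theory Submission
  imports Defs
begin


definition outer :: "real^'n \<Rightarrow> real^'n^'n" where
  "outer v = (\<chi> i j. v$i * v$j)"

definition psd :: "real^'n^'n \<Rightarrow> bool" where
  "psd D \<longleftrightarrow> (\<forall>x. 0 \<le> x \<bullet> (D *v x))"

lemma sym_entry: "sym_matrix M \<Longrightarrow> M$i$j = M$j$i"
  unfolding sym_matrix_def by (metis transpose_def vec_lambda_beta)

lemma diag_axis: "diag_mat e *v axis i 1 = e$i *\<^sub>R axis i 1"
  by (simp add: diag_mat_def matrix_vector_mult_def axis_def vec_eq_iff if_distrib[of "\<lambda>x. x * _"] sum.delta' cong: if_cong)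

lemma decomp_eig:
  fixes Q :: "real^'n^'n"
  assumes Q: "orthogonal_matrix Q" and D: "D = Q ** diag_mat e ** transpose Q"
  shows "e$i = (Q *v axis i 1) \<bullet> (D *v (Q *v axis i 1))"
proof -
  have QtQ: "transpose Q ** Q = mat 1" using Q by (simp add: orthogonal_matrix)
  have "D *v (Q *v axis i 1) = Q *v (diag_mat e *v ((transpose Q ** Q) *v axis i 1))"
    by (simp add: D matrix_vector_mul_assoc matrix_mul_assoc)
  also have "\<dots> = Q *v (e$i *\<^sub>R axis i 1)"
    by (simp only: QtQ matrix_vector_mul_lid diag_axis)
  finally have "D *v (Q *v axis i 1) = e$i *\<^sub>R (Q *v axis i 1)"
    by (simp add: matrix_vector_mult_scaleR)
  moreover have "norm (Q *v axis i 1) = 1"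
    using Q by (simp add: matrix_vector_mult_basis orthogonal_matrix_orthonormal_columns)
  ultimately show ?thesis by (simp add: inner_commute dot_square_norm power2_eq_square)
qed

lemma mat_mult_vec: "mat c *v x = c *\<^sub>R (x::real^'n)"
  by (simp add: mat_def matrix_vector_mult_def vec_eq_iff if_distrib [of "\<lambda>x. x * y" for y] cong: if_cong)

lemma pucci_minus_psd:
  fixes D :: "real^'n^'n"
  assumes lam: "0 \<le> lam" and ex: "\<exists>Q e. orthogonal_matrix Q \<and> D = Q ** diag_mat e ** transpose Q"
    and p: "psd D"
  shows "0 \<le> pucci_minus lam Lam D"
proof -
  let ?P = "\<lambda>s. \<exists>Q e. orthogonal_matrix Q \<and> D = Q ** diag_mat e ** transpose Q \<and>
      s = lam * (\<Sum>i\<in>{i. e $ i > 0}. e $ i) + Lam * (\<Sum>i\<in>{i. e $ i < 0}. e $ i)"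
  have "\<exists>s. ?P s" using ex by blast
  hence "?P (pucci_minus lam Lam D)" unfolding pucci_minus_def by (rule someI_ex)
  then obtain Q e where Q: "orthogonal_matrix Q" "D = Q ** diag_mat e ** transpose Q"
    and s: "pucci_minus lam Lam D = lam * (\<Sum>i\<in>{i. e $ i > 0}. e $ i) + Lam * (\<Sum>i\<in>{i. e $ i < 0}. e $ i)"
    by blast
  have "\<forall>i. e$i \<ge> 0" using decomp_eig[OF Q] p unfolding psd_def by metis
  hence "{i. e $ i < 0} = {}" by (simp add: Collect_empty_eq not_less)
  moreover have "(\<Sum>i\<in>{i. e $ i > 0}. e $ i) \<ge> 0" by (rule sum_nonneg) simp
  ultimately show ?thesis using s lam by simp
qed

lemma pucci_minus_mat:
  fixes c :: real
  assumes c: "c < 0"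
  shows "pucci_minus lam Lam (mat c :: real^'n^'n) = Lam * (real CARD('n) * c)"
proof -
  let ?D = "mat c :: real^'n^'n"
  let ?P = "\<lambda>s. \<exists>Q e. orthogonal_matrix Q \<and> ?D = Q ** diag_mat e ** transpose Q \<and>
      s = lam * (\<Sum>i\<in>{i. e $ i > 0}. e $ i) + Lam * (\<Sum>i\<in>{i. e $ i < 0}. e $ i)"
  have "diag_mat (\<chi> i. c) = ?D" by (simp add: diag_mat_def mat_def vec_eq_iff)
  hence "?D = mat 1 ** diag_mat (\<chi> i. c) ** transpose (mat 1)"
    by (simp add: matrix_mul_lid matrix_mul_rid)
  hence "\<exists>s. ?P s" using orthogonal_matrix_id by blast
  hence "?P (pucci_minus lam Lam ?D)" unfolding pucci_minus_def by (rule someI_ex)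
  then obtain Q e where Q: "orthogonal_matrix Q" "?D = Q ** diag_mat e ** transpose Q"
    and s: "pucci_minus lam Lam ?D = lam * (\<Sum>i\<in>{i. e $ i > 0}. e $ i) + Lam * (\<Sum>i\<in>{i. e $ i < 0}. e $ i)"
    by blast
  have n1: "\<And>i. norm (Q *v axis i 1) = 1"
    using Q by (simp add: matrix_vector_mult_basis orthogonal_matrix_orthonormal_columns)
  have "\<forall>i. e$i = c"
  proof
    fix i
    have "e$i = (Q *v axis i 1) \<bullet> (c *\<^sub>R (Q *v axis i 1))"
      using decomp_eig[OF Q, of i] by (simp add: mat_mult_vec)
    also have "\<dots> = c" using n1[of i] by (simp add: dot_square_norm power2_eq_square)
    finally show "e$i = c" .
  qed
  hence "{i. e $ i < 0} = UNIV" "{i. e $ i > 0} = {}" using c by auto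
  thus ?thesis using s \<open>\<forall>i. e$i = c\<close> by simp
qed

lemma outer_decomp:
  fixes v :: "real^'n"
  shows "\<exists>Q e. orthogonal_matrix Q \<and> outer v = Q ** diag_mat e ** transpose Q"
proof (cases "v = 0")
  case True
  have "outer v = mat 1 ** diag_mat 0 ** transpose (mat 1)"
    using True by (simp add: outer_def diag_mat_def vec_eq_iff)
  thus ?thesis using orthogonal_matrix_id by blast
next
  case False
  let ?k = "undefined :: 'n"
  have "norm (v /\<^sub>R norm v) = 1" using False by simp
  then obtain Q where Q: "orthogonal_matrix Q" "Q *v axis ?k 1 = v /\<^sub>R norm v"
    using orthogonal_matrix_exists_basis by blast
  have col: "\<And>i. Q$i$?k = v$i / norm v"
    using Q(2) by (simp add: matrix_vector_mult_basis column_def vec_eq_iff divide_inverse mult.commute)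
  have "outer v = Q ** diag_mat (axis ?k ((norm v)^2)) ** transpose Q"
  proof -
    have "\<And>i j. (Q ** diag_mat (axis ?k ((norm v)^2)) ** transpose Q)$i$j = Q$i$?k * (norm v)^2 * Q$j$?k"
      by (simp add: matrix_matrix_mult_def diag_mat_def axis_def transpose_def if_distrib [of "\<lambda>x. x * y" for y] if_distrib [of "\<lambda>x. y * x" for y] cong: if_cong)
    thus ?thesis using False by (simp add: outer_def vec_eq_iff col power2_eq_square)
  qed
  thus ?thesis using Q(1) by blast
qed

lemma outer_mult: "outer v *v x = (v \<bullet> x) *\<^sub>R (v::real^'n)"
  by (simp add: outer_def matrix_vector_mult_def inner_vec_def vec_eq_iff sum_distrib_left mult_ac)

lemma ax_D: "axis i 1 \<bullet> (D *v axis j 1) = (D::real^'n^'n)$i$j"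
  by (simp add: matrix_vector_mult_basis column_def inner_axis')

lemma psd_zero_diag:
  fixes D :: "real^'n^'n"
  assumes p: "psd D" and s: "sym_matrix D" and z: "D$j$j = 0"
  shows "D$i$j = 0"
proof (rule ccontr)
  assume nz: "D$i$j \<noteq> 0"
  define t where "t = - (\<bar>D$i$i\<bar> + 1) / (2 * D$i$j)"
  let ?x = "axis i 1 + t *\<^sub>R axis j 1"
  have "?x \<bullet> (D *v ?x) = D$i$i + t * D$i$j + t * D$j$i + t * t * D$j$j"
    by (simp add: matrix_vector_right_distrib matrix_vector_mult_scaleR inner_add ax_D algebra_simps)
  also have "\<dots> = D$i$i + 2 * t * D$i$j" using z sym_entry[OF s, of j i] by simp
  also have "\<dots> = D$i$i - (\<bar>D$i$i\<bar> + 1)" using nz by (simp add: t_def)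
  also have "\<dots> < 0" by simp
  finally show False using p unfolding psd_def by (meson not_le)
qed

lemma F_mono_psd_aux:
  fixes F :: "real^'n^'n \<Rightarrow> real"
  assumes A: "A1 lam Lam F" and fin: "finite J"
  shows "\<forall>D Y. sym_matrix D \<and> sym_matrix Y \<and> psd D \<and> (\<forall>i l. i \<notin> J \<or> l \<notin> J \<longrightarrow> D$i$l = 0)
     \<longrightarrow> F Y \<le> F (Y + D)"
  using fin
proof (induction J rule: finite_induct)
  case empty
  show ?case
  proof (intro allI impI)
    fix D Y :: "real^'n^'n"
    assume "sym_matrix D \<and> sym_matrix Y \<and> psd D \<and> (\<forall>i l. i \<notin> {} \<or> l \<notin> {} \<longrightarrow> D$i$l = 0)"
    hence "D = 0" by (simp add: vec_eq_iff)
    thus "F Y \<le> F (Y + D)" by simp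
  qed
next
  case (insert j J)
  show ?case
  proof (intro allI impI)
    fix D Y :: "real^'n^'n"
    assume H: "sym_matrix D \<and> sym_matrix Y \<and> psd D \<and> (\<forall>i l. i \<notin> insert j J \<or> l \<notin> insert j J \<longrightarrow> D$i$l = 0)"
    hence sD: "sym_matrix D" and sY: "sym_matrix Y" and pD: "psd D"
      and supp: "\<And>i l. i \<notin> insert j J \<or> l \<notin> insert j J \<Longrightarrow> D$i$l = 0" by auto
    have a0: "D$j$j \<ge> 0" using pD ax_D[of j D j] unfolding psd_def by metis
    show "F Y \<le> F (Y + D)"
    proof (cases "D$j$j = 0")
      case True
      have "\<And>i. D$i$j = 0" using psd_zero_diag[OF pD sD True] .
      hence "\<forall>i l. i \<notin> J \<or> l \<notin> J \<longrightarrow> D$i$l = 0"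
        using supp sym_entry[OF sD] by (metis insert_iff)
      thus ?thesis using insert.IH sD sY pD by blast
    next
      case False
      define \<alpha> where "\<alpha> = D$j$j"
      have ap: "\<alpha> > 0" using a0 False by (simp add: \<alpha>_def)
      define a where "a = (\<chi> i. D$i$j)"
      define v where "v = (1 / sqrt \<alpha>) *\<^sub>R a"
      define B where "B = D - outer v"
      have ov: "\<And>i l. outer v $i$l = D$i$j * D$l$j / \<alpha>"
        using ap by (simp add: outer_def v_def a_def real_sqrt_mult[symmetric])
      have sB: "sym_matrix B"
        using sD by (simp add: sym_matrix_def B_def vec_eq_iff transpose_def ov mult.commute sym_entry[OF sD])
      have Dx_j: "\<And>x. axis j 1 \<bullet> (D *v x) = a \<bullet> x"
      proof -
        fix x :: "real^'n"
        have "axis j 1 \<bullet> (D *v x) = (D *v x)$j" by (simp add: inner_axis')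
        also have "\<dots> = a \<bullet> x"
          by (simp add: matrix_vector_mult_def a_def inner_vec_def sym_entry[OF sD, of j] mult.commute)
        finally show "axis j 1 \<bullet> (D *v x) = a \<bullet> x" .
      qed
      have xD_j: "\<And>x. x \<bullet> (D *v axis j 1) = a \<bullet> x"
        by (simp add: matrix_vector_mult_basis column_def a_def inner_commute)
      have pB: "psd B"
        unfolding psd_def
      proof
        fix x :: "real^'n"
        define s where "s = (a \<bullet> x) / \<alpha>"
        have xa: "x \<bullet> a = a \<bullet> x" by (rule inner_commute)
        let ?y = "x - s *\<^sub>R axis j 1"
        have "?y \<bullet> (D *v ?y) = x \<bullet> (D *v x) - s * (x \<bullet> (D *v axis j 1)) - s * (axis j 1 \<bullet> (D *v x)) + s * s * \<alpha>"
          by (simp add: matrix_vector_mult_diff_distrib matrix_vector_mult_scaleR inner_diff ax_D \<alpha>_def algebra_simps)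
        also have "\<dots> = x \<bullet> (D *v x) - (a \<bullet> x)^2 / \<alpha>"
          using ap by (simp add: Dx_j xD_j s_def field_simps power2_eq_square)
        also have "\<dots> = x \<bullet> (B *v x)"
          using ap by (simp add: B_def matrix_vector_mult_diff_rdistrib outer_mult inner_diff v_def power2_eq_square real_sqrt_mult[symmetric] field_simps xa)
        finally show "0 \<le> x \<bullet> (B *v x)" using pD unfolding psd_def by metis
      qed
      have aout: "\<And>i. i \<notin> insert j J \<Longrightarrow> D$i$j = 0" using supp by blast
      have suppB: "\<forall>i l. i \<notin> J \<or> l \<notin> J \<longrightarrow> B$i$l = 0"
      proof (intro allI impI)
        fix i l assume il: "i \<notin> J \<or> l \<notin> J"
        show "B$i$l = 0"
        proof (cases "i = j \<or> l = j")
          case True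
          thus ?thesis using ap sym_entry[OF sD] by (auto simp: B_def ov \<alpha>_def)
        next
          case False
          hence "i \<notin> insert j J \<or> l \<notin> insert j J" using il by auto
          thus ?thesis using supp aout by (auto simp: B_def ov)
        qed
      qed
      have IH: "F Y \<le> F (Y + B)" using insert.IH sB sY pB suppB by blast
      have sYD: "sym_matrix (Y + D)" and sYB: "sym_matrix (Y + B)"
        using sY sD sB by (auto simp: sym_matrix_def transpose_def vec_eq_iff)
      have "pucci_minus lam Lam ((Y + D) - (Y + B)) \<le> F (Y + D) - F (Y + B)"
        using A sYD sYB unfolding A1_def by blast
      moreover have "(Y + D) - (Y + B) = outer v" by (simp add: B_def)
      moreover have "psd (outer v)" by (simp add: psd_def outer_mult inner_commute)
      moreover have "0 \<le> lam" using A unfolding A1_def by simp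
      ultimately have "0 \<le> F (Y + D) - F (Y + B)" using pucci_minus_psd[OF _ outer_decomp, of lam v Lam] by simp
      thus ?thesis using IH by linarith
    qed
  qed
qed

lemma F_mono:
  fixes F :: "real^'n^'n \<Rightarrow> real"
  assumes A: "A1 lam Lam F" and "sym_matrix X" "sym_matrix Y" "psd (X - Y)"
  shows "F Y \<le> F X"
proof -
  have "sym_matrix (X - Y)" using assms by (simp add: sym_matrix_def transpose_def vec_eq_iff)
  moreover have "\<forall>D Y. sym_matrix D \<and> sym_matrix Y \<and> psd D \<and> (\<forall>i l. i \<notin> UNIV \<or> l \<notin> UNIV \<longrightarrow> D$i$l = 0)
     \<longrightarrow> F Y \<le> F (Y + D)" by (rule F_mono_psd_aux[OF A]) simp
  ultimately have "F Y \<le> F (Y + (X - Y))" using assms by blast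
  thus ?thesis by simp
qed




lemma line_deriv:
  fixes phi :: "real^'n \<Rightarrow> real"
  assumes "(phi has_derivative (\<lambda>h. Dphi (p + t *\<^sub>R q) \<bullet> h)) (at (p + t *\<^sub>R q))"
  shows "((\<lambda>t. phi (p + t *\<^sub>R q)) has_real_derivative (Dphi (p + t *\<^sub>R q) \<bullet> q)) (at t)"
proof -
  have l: "((\<lambda>t. p + t *\<^sub>R q) has_derivative (\<lambda>h. h *\<^sub>R q)) (at t)"
    by (auto intro!: derivative_eq_intros)
  have "((\<lambda>t. phi (p + t *\<^sub>R q)) has_derivative (\<lambda>h. Dphi (p + t *\<^sub>R q) \<bullet> (h *\<^sub>R q))) (at t)"
    using diff_chain_at[OF l assms] by (simp add: o_def)
  thus ?thesis unfolding has_field_derivative_def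
    by (rule has_derivative_eq_rhs) (auto simp: fun_eq_iff mult.commute)
qed

lemma deriv_small:
  fixes Dphi :: "real^'n \<Rightarrow> real^'n" and M :: "real^'n^'n"
  assumes "(Dphi has_derivative (\<lambda>h. M *v h)) (at x0)" "e > 0"
  shows "\<exists>d>0. \<forall>y. norm y < d \<longrightarrow> norm (Dphi (x0 + y) - Dphi x0 - M *v y) \<le> e * norm y"
proof -
  from assms(1)[unfolded has_derivative_at_alt] assms(2) obtain d where d: "d > 0"
    "\<forall>y. norm (y - x0) < d \<longrightarrow> norm (Dphi y - Dphi x0 - M *v (y - x0)) \<le> e * norm (y - x0)" by blast
  show ?thesis
  proof (intro exI[of _ d] conjI allI impI)
    fix y :: "real^'n" assume "norm y < d"
    thus "norm (Dphi (x0 + y) - Dphi x0 - M *v y) \<le> e * norm y" using d(2)[rule_format, of "x0 + y"] by simp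
  qed (rule d(1))
qed

lemma taylor2:
  fixes phi :: "real^'n \<Rightarrow> real"
  assumes S: "open S" "x0 \<in> S" and D1: "\<forall>x\<in>S. (phi has_derivative (\<lambda>h. Dphi x \<bullet> h)) (at x)"
    and D2: "(Dphi has_derivative (\<lambda>h. M *v h)) (at x0)" and e: "e > 0"
  shows "\<exists>d>0. ball x0 d \<subseteq> S \<and> (\<forall>y. norm y < d \<longrightarrow>
     \<bar>phi (x0 + y) - phi x0 - Dphi x0 \<bullet> y - (1/2) * (y \<bullet> (M *v y))\<bar> \<le> e * (norm y)^2)"
proof -
  obtain d1 where d1: "d1 > 0" "\<forall>y. norm y < d1 \<longrightarrow> norm (Dphi (x0 + y) - Dphi x0 - M *v y) \<le> e * norm y"
    using deriv_small[OF D2 e] by blast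
  obtain d2 where d2: "d2 > 0" "ball x0 d2 \<subseteq> S" using S open_contains_ball by blast
  define d where "d = min d1 d2"
  have "d > 0" using d1 d2 by (simp add: d_def)
  moreover have "ball x0 d \<subseteq> S" using d2 by (auto simp: d_def)
  moreover have "\<forall>y. norm y < d \<longrightarrow>
     \<bar>phi (x0 + y) - phi x0 - Dphi x0 \<bullet> y - (1/2) * (y \<bullet> (M *v y))\<bar> \<le> e * (norm y)^2"
  proof (intro allI impI)
    fix y :: "real^'n" assume y: "norm y < d"
    define g where "g = (\<lambda>t. phi (x0 + t *\<^sub>R y) - t * (Dphi x0 \<bullet> y) - t^2/2 * (y \<bullet> (M *v y)))"
    define g' where "g' = (\<lambda>t. Dphi (x0 + t *\<^sub>R y) \<bullet> y - Dphi x0 \<bullet> y - t * (y \<bullet> (M *v y)))"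
    have inS: "x0 + t *\<^sub>R y \<in> S" if "0 \<le> t" "t \<le> 1" for t
    proof -
      have "norm (t *\<^sub>R y) \<le> norm y" using that by (simp add: mult_left_le_one_le)
      hence "x0 + t *\<^sub>R y \<in> ball x0 d2" using y by (simp add: dist_norm d_def)
      thus ?thesis using d2 by blast
    qed
    have der: "(g has_real_derivative g' t) (at t)" if "0 \<le> t" "t \<le> 1" for t
      unfolding g_def g'_def
      using line_deriv[of phi Dphi x0 t y] D1 inS[OF that]
      by (auto intro!: derivative_eq_intros simp: power2_eq_square)
    obtain z where z: "0 < z" "z < 1" "g 1 - g 0 = (1 - 0) * g' z"
      using MVT2[of 0 1 g g'] der by auto
    have "g' z = (Dphi (x0 + z *\<^sub>R y) - Dphi x0 - M *v (z *\<^sub>R y)) \<bullet> y"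
      by (simp add: g'_def inner_diff_left matrix_vector_mult_scaleR inner_commute[of y "M *v y"])
    hence "\<bar>g' z\<bar> \<le> norm (Dphi (x0 + z *\<^sub>R y) - Dphi x0 - M *v (z *\<^sub>R y)) * norm y"
      by (simp add: Cauchy_Schwarz_ineq2)
    also have "\<dots> \<le> (e * norm (z *\<^sub>R y)) * norm y"
      apply (rule mult_right_mono)
      using d1(2)[rule_format, of "z *\<^sub>R y"] y z mult_left_le_one_le[of "norm y" z] by (auto simp: d_def)
    also have "\<dots> \<le> e * (norm y)^2"
      using z e by (simp add: power2_eq_square mult_left_le_one_le)
    finally show "\<bar>phi (x0 + y) - phi x0 - Dphi x0 \<bullet> y - (1/2) * (y \<bullet> (M *v y))\<bar> \<le> e * (norm y)^2"
      using z(3) by (simp add: g_def)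
  qed
  ultimately show ?thesis by blast
qed

lemma mixed_est:
  fixes phi :: "real^'n \<Rightarrow> real" and M :: "real^'n^'n"
  assumes S: "open S" "x0 \<in> S" and D1: "\<forall>x\<in>S. (phi has_derivative (\<lambda>h. Dphi x \<bullet> h)) (at x)"
    and D2: "(Dphi has_derivative (\<lambda>h. M *v h)) (at x0)" and e: "e > 0"
  shows "\<exists>d>0. \<forall>s. 0 < s \<and> s < d \<longrightarrow>
    \<bar>phi (x0 + s *\<^sub>R a + s *\<^sub>R b) - phi (x0 + s *\<^sub>R a) - phi (x0 + s *\<^sub>R b) + phi x0
       - s^2 * ((M *v b) \<bullet> a)\<bar> \<le> e * s^2"
proof -
  define C where "C = (2 * norm a + norm b) * norm a + 1"
  have C: "C > 0" by (simp add: C_def add_nonneg_pos)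
  define e' where "e' = e / C"
  have e': "e' > 0" using e C by (simp add: e'_def)
  obtain d1 where d1: "d1 > 0" "\<forall>y. norm y < d1 \<longrightarrow> norm (Dphi (x0 + y) - Dphi x0 - M *v y) \<le> e' * norm y"
    using deriv_small[OF D2 e'] by blast
  obtain d2 where d2: "d2 > 0" "ball x0 d2 \<subseteq> S" using S open_contains_ball by blast
  define d where "d = min d1 d2 / (norm a + norm b + 1)"
  have dpos: "d > 0" using d1 d2 by (simp add: d_def add_nonneg_pos)
  have key: "norm (t *\<^sub>R a + s' *\<^sub>R b) < min d1 d2" if "0 \<le> t" "t \<le> s" "s < d" "0 \<le> s'" "s' \<le> s" for t s s'
  proof -
    have "norm (t *\<^sub>R a + s' *\<^sub>R b) \<le> t * norm a + s' * norm b"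
      using that norm_triangle_ineq[of "t *\<^sub>R a" "s' *\<^sub>R b"] by simp
    also have "\<dots> \<le> s * (norm a + norm b + 1)"
      using that mult_right_mono[of t s "norm a"] mult_right_mono[of s' s "norm b"] by (simp add: algebra_simps)
    also have "\<dots> < min d1 d2"
    proof -
      have P: "0 < norm a + norm b + 1" by (simp add: add_nonneg_pos)
      have "s < min d1 d2 / (norm a + norm b + 1)" using that(3) by (simp only: d_def)
      thus ?thesis using pos_less_divide_eq[OF P] by blast
    qed
    finally show ?thesis .
  qed
  have "\<forall>s. 0 < s \<and> s < d \<longrightarrow>
    \<bar>phi (x0 + s *\<^sub>R a + s *\<^sub>R b) - phi (x0 + s *\<^sub>R a) - phi (x0 + s *\<^sub>R b) + phi x0
       - s^2 * ((M *v b) \<bullet> a)\<bar> \<le> e * s^2"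
  proof (intro allI impI)
    fix s assume s: "0 < s \<and> s < d"
    define p where "p = x0 + s *\<^sub>R b"
    define g where "g = (\<lambda>t. phi (p + t *\<^sub>R a) - phi (x0 + t *\<^sub>R a))"
    define g' where "g' = (\<lambda>t. Dphi (p + t *\<^sub>R a) \<bullet> a - Dphi (x0 + t *\<^sub>R a) \<bullet> a)"
    have in1: "p + t *\<^sub>R a \<in> S" "x0 + t *\<^sub>R a \<in> S" if "0 \<le> t" "t \<le> s" for t
    proof -
      have "norm (t *\<^sub>R a + s *\<^sub>R b) < d2" "norm (t *\<^sub>R a + 0 *\<^sub>R b) < d2"
        using key[of t s s] key[of t s 0] that s by auto
      moreover have "dist x0 (p + t *\<^sub>R a) = norm (t *\<^sub>R a + s *\<^sub>R b)"
        unfolding p_def dist_norm by (subst norm_minus_commute) (simp add: add.commute)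
      moreover have "dist x0 (x0 + t *\<^sub>R a) = norm (t *\<^sub>R a + 0 *\<^sub>R b)"
        unfolding dist_norm by (subst norm_minus_commute) simp
      ultimately have "p + t *\<^sub>R a \<in> ball x0 d2" "x0 + t *\<^sub>R a \<in> ball x0 d2"
        by (auto simp only: mem_ball)
      thus "p + t *\<^sub>R a \<in> S" "x0 + t *\<^sub>R a \<in> S" using d2 by auto
    qed
    have der: "(g has_real_derivative g' t) (at t)" if "0 \<le> t" "t \<le> s" for t
      unfolding g_def g'_def
      using line_deriv[of phi Dphi p t a] line_deriv[of phi Dphi x0 t a] D1 in1[OF that]
      by (auto intro!: derivative_eq_intros)
    obtain z where z: "0 < z" "z < s" "g s - g 0 = (s - 0) * g' z"
      using MVT2[of 0 s g g'] der s by auto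
    define r where "r = (\<lambda>y. Dphi (x0 + y) - Dphi x0 - M *v y)"
    have rb: "norm (r y) \<le> e' * norm y" if "norm y < d1" for y
      using d1(2) that by (simp add: r_def)
    have "Dphi (p + z *\<^sub>R a) - Dphi (x0 + z *\<^sub>R a) - s *\<^sub>R (M *v b)
       = r (z *\<^sub>R a + s *\<^sub>R b) - r (z *\<^sub>R a + 0 *\<^sub>R b)"
    proof -
      have e1: "x0 + (z *\<^sub>R a + s *\<^sub>R b) = p + z *\<^sub>R a" by (simp add: p_def add_ac)
      have e2: "M *v (z *\<^sub>R a + s *\<^sub>R b) = M *v (z *\<^sub>R a) + s *\<^sub>R (M *v b)"
        by (simp only: matrix_vector_right_distrib matrix_vector_mult_scaleR)
      show ?thesis unfolding r_def e1 e2 by simp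
    qed
    moreover have "g' z - s * ((M *v b) \<bullet> a) = (Dphi (p + z *\<^sub>R a) - Dphi (x0 + z *\<^sub>R a) - s *\<^sub>R (M *v b)) \<bullet> a"
      by (simp add: g'_def inner_diff_left)
    ultimately have "g' z - s * ((M *v b) \<bullet> a) = (r (z *\<^sub>R a + s *\<^sub>R b) - r (z *\<^sub>R a + 0 *\<^sub>R b)) \<bullet> a"
      by simp
    hence "\<bar>g' z - s * ((M *v b) \<bullet> a)\<bar> \<le> norm (r (z *\<^sub>R a + s *\<^sub>R b) - r (z *\<^sub>R a + 0 *\<^sub>R b)) * norm a"
      by (simp add: Cauchy_Schwarz_ineq2)
    also have "\<dots> \<le> (norm (r (z *\<^sub>R a + s *\<^sub>R b)) + norm (r (z *\<^sub>R a + 0 *\<^sub>R b))) * norm a"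
      by (simp add: mult_right_mono norm_triangle_ineq4)
    also have "\<dots> \<le> (e' * (s * norm a + s * norm b) + e' * (s * norm a)) * norm a"
    proof (rule mult_right_mono)
      have n1: "norm (z *\<^sub>R a + s *\<^sub>R b) \<le> s * norm a + s * norm b"
        using norm_triangle_ineq[of "z *\<^sub>R a" "s *\<^sub>R b"] z s by (simp add: mult_right_mono order_trans)
      have n2: "norm (z *\<^sub>R a + 0 *\<^sub>R b) \<le> s * norm a" using z by (simp add: mult_right_mono)
      have "norm (r (z *\<^sub>R a + s *\<^sub>R b)) \<le> e' * (s * norm a + s * norm b)"
        using rb[of "z *\<^sub>R a + s *\<^sub>R b"] key[of z s s] z s n1 e'
        by (meson less_eq_real_def min_less_iff_conj mult_left_mono order_trans)
      moreover have "norm (r (z *\<^sub>R a + 0 *\<^sub>R b)) \<le> e' * (s * norm a)"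
        using rb[of "z *\<^sub>R a + 0 *\<^sub>R b"] key[of z s 0] z s n2 e'
        by (meson less_eq_real_def min_less_iff_conj mult_left_mono order_trans)
      ultimately show "norm (r (z *\<^sub>R a + s *\<^sub>R b)) + norm (r (z *\<^sub>R a + 0 *\<^sub>R b)) \<le> e' * (s * norm a + s * norm b) + e' * (s * norm a)"
        by simp
    qed simp
    also have "\<dots> = e' * s * ((2 * norm a + norm b) * norm a)" by (simp add: algebra_simps)
    also have "\<dots> \<le> e' * s * C" using e' s by (simp add: C_def)
    also have "\<dots> = e * s" using C by (simp add: e'_def)
    finally have bound: "\<bar>g' z - s * ((M *v b) \<bullet> a)\<bar> \<le> e * s" .
    have "phi (x0 + s *\<^sub>R a + s *\<^sub>R b) - phi (x0 + s *\<^sub>R a) - phi (x0 + s *\<^sub>R b) + phi x0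
       - s^2 * ((M *v b) \<bullet> a) = s * (g' z - s * ((M *v b) \<bullet> a))"
      using z(3) by (simp add: g_def p_def algebra_simps power2_eq_square)
    also have "\<bar>\<dots>\<bar> \<le> s * (e * s)" using bound s by (simp add: abs_mult mult_left_mono)
    finally show "\<bar>phi (x0 + s *\<^sub>R a + s *\<^sub>R b) - phi (x0 + s *\<^sub>R a) - phi (x0 + s *\<^sub>R b) + phi x0
       - s^2 * ((M *v b) \<bullet> a)\<bar> \<le> e * s^2" by (simp add: power2_eq_square mult_ac)
  qed
  thus ?thesis using dpos by blast
qed




lemma hess_sym:
  fixes phi :: "real^'n \<Rightarrow> real" and M :: "real^'n^'n"
  assumes S: "open S" "x0 \<in> S" and D1: "\<forall>x\<in>S. (phi has_derivative (\<lambda>h. Dphi x \<bullet> h)) (at x)"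
    and D2: "(Dphi has_derivative (\<lambda>h. M *v h)) (at x0)"
  shows "sym_matrix M"
proof -
  have key: "(M *v b) \<bullet> a = (M *v a) \<bullet> b" for a b
  proof (rule ccontr)
    assume ne: "(M *v b) \<bullet> a \<noteq> (M *v a) \<bullet> b"
    define \<eta> where "\<eta> = \<bar>(M *v b) \<bullet> a - (M *v a) \<bullet> b\<bar>"
    have eta: "\<eta> > 0" using ne by (simp add: \<eta>_def)
    obtain d1 where d1: "d1 > 0" "\<forall>s. 0 < s \<and> s < d1 \<longrightarrow>
      \<bar>phi (x0 + s *\<^sub>R a + s *\<^sub>R b) - phi (x0 + s *\<^sub>R a) - phi (x0 + s *\<^sub>R b) + phi x0
       - s^2 * ((M *v b) \<bullet> a)\<bar> \<le> (\<eta>/4) * s^2"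
      using mixed_est[OF S D1 D2, of "\<eta>/4" a b] eta by auto
    obtain d2 where d2: "d2 > 0" "\<forall>s. 0 < s \<and> s < d2 \<longrightarrow>
      \<bar>phi (x0 + s *\<^sub>R b + s *\<^sub>R a) - phi (x0 + s *\<^sub>R b) - phi (x0 + s *\<^sub>R a) + phi x0
       - s^2 * ((M *v a) \<bullet> b)\<bar> \<le> (\<eta>/4) * s^2"
      using mixed_est[OF S D1 D2, of "\<eta>/4" b a] eta by auto
    define s where "s = min d1 d2 / 2"
    have s: "0 < s" "s < d1" "s < d2" using d1 d2 by (auto simp: s_def)
    have comm: "x0 + s *\<^sub>R b + s *\<^sub>R a = x0 + s *\<^sub>R a + s *\<^sub>R b" by (simp add: add_ac)
    define X where "X = phi (x0 + s *\<^sub>R a + s *\<^sub>R b) - phi (x0 + s *\<^sub>R a) - phi (x0 + s *\<^sub>R b) + phi x0"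
    have h1: "\<bar>X - s^2 * ((M *v b) \<bullet> a)\<bar> \<le> (\<eta>/4) * s^2" using d1(2) s by (simp add: X_def)
    have h2: "\<bar>X - s^2 * ((M *v a) \<bullet> b)\<bar> \<le> (\<eta>/4) * s^2" using d2(2) s comm
      by (simp add: X_def algebra_simps)
    have "s^2 * \<eta> = \<bar>(X - s^2 * ((M *v a) \<bullet> b)) - (X - s^2 * ((M *v b) \<bullet> a))\<bar>"
    proof -
      have "(X - s^2 * ((M *v a) \<bullet> b)) - (X - s^2 * ((M *v b) \<bullet> a)) = s^2 * ((M *v b) \<bullet> a - (M *v a) \<bullet> b)"
        by (simp add: algebra_simps)
      thus ?thesis by (simp add: \<eta>_def abs_mult)
    qed
    also have "\<dots> \<le> (\<eta>/4) * s^2 + (\<eta>/4) * s^2" using h1 h2 by linarith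
    finally have "s^2 * \<eta> \<le> (\<eta>/2) * s^2" by simp
    moreover have "s^2 > 0" using s by simp
    ultimately show False using eta by (simp add: field_simps)
  qed
  show ?thesis unfolding sym_matrix_def
  proof (simp add: vec_eq_iff transpose_def, intro allI)
    fix i j
    have "M$j$i = (M *v axis i 1) \<bullet> axis j 1" using ax_D[of j M i] by (simp add: inner_commute)
    also have "\<dots> = (M *v axis j 1) \<bullet> axis i 1" by (rule key[symmetric])
    also have "\<dots> = M$i$j" using ax_D[of i M j] by (simp add: inner_commute)
    finally show "M$j$i = M$i$j" .
  qed
qed




definition quad :: "real \<Rightarrow> real^'n \<Rightarrow> real^'n^'n \<Rightarrow> real^'n \<Rightarrow> real^'n \<Rightarrow> real" where
  "quad c b A z x = c + b \<bullet> (x - z) + (1/2) * ((x - z) \<bullet> (A *v (x - z)))"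

lemma sym_inner: "sym_matrix A \<Longrightarrow> (A *v x) \<bullet> y = x \<bullet> (A *v (y::real^'n))"
  unfolding sym_matrix_def by (metis dot_lmul_matrix vector_transpose_matrix)

lemma lin_deriv: "((\<lambda>x. A *v (x - z)) has_derivative (\<lambda>h. A *v h)) (at (x::real^'n))"
proof -
  have "((\<lambda>x. x - z) has_derivative (\<lambda>h. h)) (at x)" by (auto intro!: derivative_eq_intros)
  from bounded_linear.has_derivative[OF matrix_vector_mul_bounded_linear this] show ?thesis .
qed

lemma quad_deriv:
  fixes A :: "real^'n^'n"
  assumes sA: "sym_matrix A"
  shows "(quad c b A z has_derivative (\<lambda>h. (b + A *v (x - z)) \<bullet> h)) (at x)"
proof -
  have lin: "((\<lambda>x. A *v (x - z)) has_derivative (\<lambda>h. A *v h)) (at x)"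
    by (rule lin_deriv)
  have "(quad c b A z has_derivative (\<lambda>h. b \<bullet> h + (1/2) * (h \<bullet> (A *v (x - z)) + (x - z) \<bullet> (A *v h)))) (at x)"
    unfolding quad_def[abs_def]
    by (auto intro!: derivative_eq_intros lin)
  moreover have "(\<lambda>h. b \<bullet> h + (1/2) * (h \<bullet> (A *v (x - z)) + (x - z) \<bullet> (A *v h))) = (\<lambda>h. (b + A *v (x - z)) \<bullet> h)"
  proof
    fix h
    have e1: "(x - z) \<bullet> (A *v h) = (A *v (x - z)) \<bullet> h" using sym_inner[OF sA, of "x - z" h] by simp
    have e2: "h \<bullet> (A *v (x - z)) = (A *v (x - z)) \<bullet> h" by (rule inner_commute)
    have e3: "b \<bullet> h + (A *v (x - z)) \<bullet> h = (b + A *v (x - z)) \<bullet> h" by (simp add: inner_add_left)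
    show "b \<bullet> h + (1/2) * (h \<bullet> (A *v (x - z)) + (x - z) \<bullet> (A *v h)) = (b + A *v (x - z)) \<bullet> h"
      unfolding e1 e2 e3[symmetric] by simp
  qed
  ultimately show ?thesis by simp
qed

lemma quad_C2:
  assumes "sym_matrix A" "open T"
  shows "C2_on_with (quad c b A z) (\<lambda>x. b + A *v (x - z)) (\<lambda>x. A) T"
  unfolding C2_on_with_def
proof (intro conjI ballI)
  fix x
  show "(quad c b A z has_derivative (\<lambda>h. (b + A *v (x - z)) \<bullet> h)) (at x)" by (rule quad_deriv[OF assms(1)])
  show "((\<lambda>x. b + A *v (x - z)) has_derivative (\<lambda>h. A *v h)) (at x)"
    using lin_deriv[of A z x] by (auto intro!: derivative_eq_intros)
qed (auto simp: assms)

lemma quad_cont: "sym_matrix A \<Longrightarrow> continuous_on U (quad c b A z)"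
  by (meson continuous_at_imp_continuous_on has_derivative_continuous quad_deriv)




lemma sym_mat: "sym_matrix (mat c :: real^'n^'n)"
  by (simp add: sym_matrix_def)

lemma sym_add: "sym_matrix A \<Longrightarrow> sym_matrix B \<Longrightarrow> sym_matrix (A + B :: real^'n^'n)"
  by (simp add: sym_matrix_def transpose_def vec_eq_iff)

lemma core:
  fixes G :: "real^'n^'n \<Rightarrow> real" and u phi :: "real^'n \<Rightarrow> real"
    and Dphi :: "real^'n \<Rightarrow> real^'n" and M :: "real^'n^'n"
  assumes Om: "open Om" and uc: "continuous_on Om u"
    and HYP: "\<And>c b A z y T. sym_matrix A \<Longrightarrow> open T \<Longrightarrow> T \<subseteq> Om \<Longrightarrow> y \<in> T \<Longrightarrow>
        u y = quad c b A z y \<Longrightarrow> (\<forall>x\<in>T. u x \<le> quad c b A z x) \<Longrightarrow> b + A *v (y - z) \<noteq> xi \<Longrightarrow> 0 \<le> G A"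
    and G1: "\<And>A. sym_matrix A \<Longrightarrow> psd A \<Longrightarrow> 0 \<le> G A"
    and G2: "\<And>X c. sym_matrix X \<Longrightarrow> c > 0 \<Longrightarrow> G (X + mat c) - K * c \<le> G X"
    and S: "open S" "x0 \<in> S" and x0: "x0 \<in> Om"
    and touch: "u x0 = phi x0" "\<forall>x\<in>S \<inter> Om. u x \<le> phi x"
    and D1: "\<forall>x\<in>S. (phi has_derivative (\<lambda>h. Dphi x \<bullet> h)) (at x)"
    and D2: "(Dphi has_derivative (\<lambda>h. M *v h)) (at x0)" and xi: "Dphi x0 = xi" and sM: "sym_matrix M"
  shows "0 \<le> G M"
proof -
  have step: "0 \<le> G (M + mat (4*e))" if e: "e > 0" for e
  proof -
    define A where "A = M + mat (4*e)"
    have sA: "sym_matrix A" unfolding A_def by (rule sym_add[OF sM sym_mat])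
    show ?thesis
    proof (cases "psd A")
      case True
      thus ?thesis using G1 sA by (simp add: A_def)
    next
      case False
      then obtain d where d: "d \<bullet> (A *v d) < 0" unfolding psd_def by (auto simp: not_le)
      obtain \<delta> where \<delta>: "\<delta> > 0" "ball x0 \<delta> \<subseteq> S" "\<forall>y. norm y < \<delta> \<longrightarrow>
         \<bar>phi (x0 + y) - phi x0 - Dphi x0 \<bullet> y - (1/2) * (y \<bullet> (M *v y))\<bar> \<le> e * (norm y)^2"
        using taylor2[OF S D1 D2 e] by blast
      obtain \<delta>' where \<delta>': "\<delta>' > 0" "ball x0 \<delta>' \<subseteq> Om" using Om x0 open_contains_ball by blast
      define \<rho> where "\<rho> = min \<delta> \<delta>' / 2"
      have \<rho>: "\<rho> > 0" using \<delta> \<delta>' by (simp add: \<rho>_def)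
      have cb: "cball x0 \<rho> \<subseteq> S \<inter> Om" "cball x0 \<rho> \<subseteq> ball x0 \<delta>"
        using \<delta> \<delta>' \<rho> by (auto simp: \<rho>_def subset_iff)
      define Q where "Q = quad (phi x0) xi A x0"
      have Qge: "u x \<le> Q x - e * (norm (x - x0))^2" if x: "x \<in> cball x0 \<rho>" for x
      proof -
        define y where "y = x - x0"
        have ny: "norm y < \<delta>" using cb(2) x by (auto simp: y_def dist_norm norm_minus_commute)
        have "A *v y = M *v y + (4*e) *\<^sub>R y"
          by (simp add: A_def matrix_vector_mult_add_rdistrib mat_mult_vec)
        hence yAy: "y \<bullet> (A *v y) = y \<bullet> (M *v y) + 4 * e * (norm y)^2"
          by (simp add: inner_add_right power2_norm_eq_inner)
        have "u x \<le> phi x" using touch(2) cb(1) x by blast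
        also have "phi x = phi (x0 + y)" by (simp add: y_def)
        also have "\<dots> \<le> phi x0 + xi \<bullet> y + (1/2) * (y \<bullet> (M *v y)) + e * (norm y)^2"
          using \<delta>(3)[rule_format, OF ny] unfolding xi by (simp add: abs_le_iff)
        also have "\<dots> = Q x - e * (norm (x - x0))^2"
          by (simp add: Q_def quad_def yAy y_def[symmetric] algebra_simps)
        finally show ?thesis .
      qed
      have Ad: "A *v d \<noteq> 0" using d by auto
      define t where "t = e * \<rho> / (2 * norm (A *v d))"
      have t: "t > 0" using e \<rho> Ad by (simp add: t_def)
      define h where "h = - (t *\<^sub>R (A *v d))"
      have nh: "norm h = e * \<rho> / 2" using Ad e \<rho> by (simp add: h_def t_def)
      define f where "f = (\<lambda>x. u x - Q x - h \<bullet> (x - x0))"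
      have fc: "continuous_on (cball x0 \<rho>) f"
        unfolding f_def Q_def
        by (intro continuous_intros continuous_on_subset[OF uc] quad_cont[OF sA]) (use cb in auto)
      obtain x1 where x1: "x1 \<in> cball x0 \<rho>" "\<forall>y\<in>cball x0 \<rho>. f y \<le> f x1"
        using continuous_attains_sup[OF compact_cball _ fc] \<rho> by fastforce
      have f0: "f x0 = 0" by (simp add: f_def Q_def quad_def touch(1))
      have "x0 \<in> cball x0 \<rho>" using \<rho> by simp
      hence fx1: "0 \<le> f x1" using x1(2) f0 by metis
      define y1 where "y1 = x1 - x0"
      have hy: "h \<bullet> y1 \<le> - e * (norm y1)^2"
        using fx1 Qge[OF x1(1)] by (simp add: f_def y1_def)
      have ny1: "norm y1 < \<rho>"
      proof (cases "y1 = 0")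
        case True thus ?thesis using \<rho> by simp
      next
        case False
        have "e * (norm y1)^2 \<le> - (h \<bullet> y1)" using hy by simp
        also have "\<dots> \<le> norm h * norm y1" using Cauchy_Schwarz_ineq2[of h y1] by simp
        finally have "e * norm y1 * norm y1 \<le> (e * \<rho> / 2) * norm y1" by (simp add: nh power2_eq_square mult_ac)
        moreover have "norm y1 > 0" using False by simp
        ultimately have "e * norm y1 \<le> e * \<rho> / 2" by (meson mult_right_le_imp_le)
        hence "norm y1 \<le> \<rho> / 2" using e by simp
        thus ?thesis using \<rho> by simp
      qed
      define T where "T = ball x0 \<rho>"
      have T: "open T" "T \<subseteq> Om" "x1 \<in> T" "T \<subseteq> cball x0 \<rho>"
        using cb ny1 by (auto simp: T_def y1_def dist_norm norm_minus_commute)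
      have qeq: "quad (phi x0 + f x1) (xi + h) A x0 x = Q x + h \<bullet> (x - x0) + f x1" for x
        by (simp add: Q_def quad_def inner_add_left algebra_simps)
      show ?thesis
      proof (cases "(xi + h) + A *v (x1 - x0) = xi")
        case False
        have "0 \<le> G A"
        proof (rule HYP[OF sA T(1) T(2) T(3)])
          show "u x1 = quad (phi x0 + f x1) (xi + h) A x0 x1" unfolding qeq by (simp add: f_def)
          show "\<forall>x\<in>T. u x \<le> quad (phi x0 + f x1) (xi + h) A x0 x"
            unfolding qeq using x1(2) T(4) by (force simp: f_def)
        qed (use False in simp)
        thus ?thesis by (simp add: A_def)
      next
        case True
        hence Ay: "A *v y1 = t *\<^sub>R (A *v d)" by (simp add: y1_def h_def algebra_simps)
        have "h \<bullet> y1 = - t * ((A *v d) \<bullet> y1)" by (simp add: h_def)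
        also have "\<dots> = - t * (d \<bullet> (A *v y1))" by (simp add: sym_inner[OF sA])
        also have "\<dots> = - (t * t) * (d \<bullet> (A *v d))" by (simp add: Ay)
        finally have "h \<bullet> y1 > 0" using d t by (simp add: mult_pos_neg)
        moreover have "- e * (norm y1)^2 \<le> 0" using e by simp
        ultimately show ?thesis using hy by linarith
      qed
    qed
  qed
  show ?thesis
  proof (rule ccontr)
    assume neg: "\<not> 0 \<le> G M"
    define e where "e = - G M / (8 * (\<bar>K\<bar> + 1))"
    have "8 * (\<bar>K\<bar> + 1) > 0" by (simp add: add_nonneg_pos)
    hence e: "e > 0" using neg unfolding e_def by (intro divide_pos_pos) auto
    have "G (M + mat (4*e)) - K * (4*e) \<le> G M" using G2[OF sM] e by simp
    hence "- K * (4*e) \<le> G M" using step[OF e] by linarith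
    moreover have "K * (4*e) \<le> \<bar>K\<bar> * (4*e)" using e by (simp add: mult_right_mono)
    moreover have "\<bar>K\<bar> * (4*e) = - G M * (\<bar>K\<bar> / (2 * (\<bar>K\<bar> + 1)))"
      by (simp add: e_def field_simps)
    moreover have "\<bar>K\<bar> / (2 * (\<bar>K\<bar> + 1)) < 1/2" by (simp add: field_simps)
    ultimately have "- G M * (\<bar>K\<bar> / (2 * (\<bar>K\<bar> + 1))) < - G M * (1/2)"
      using neg by (intro mult_strict_left_mono) auto
    thus False using \<open>- K * (4*e) \<le> G M\<close> \<open>K * (4*e) \<le> \<bar>K\<bar> * (4*e)\<close>
      \<open>\<bar>K\<bar> * (4*e) = - G M * (\<bar>K\<bar> / (2 * (\<bar>K\<bar> + 1)))\<close> neg by linarith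
  qed
qed




lemma F_shift:
  fixes F :: "real^'n^'n \<Rightarrow> real"
  assumes A: "A1 lam Lam F" and sY: "sym_matrix Y" and c: "c > 0"
  shows "F (Y + mat c) - (Lam * real CARD('n)) * c \<le> F Y"
proof -
  have "sym_matrix (Y + mat c)" by (rule sym_add[OF sY sym_mat])
  hence "pucci_minus lam Lam (Y - (Y + mat c)) \<le> F Y - F (Y + mat c)"
    using A sY unfolding A1_def by blast
  moreover have "Y - (Y + mat c) = (mat (-c) :: real^'n^'n)" by (simp add: mat_def vec_eq_iff)
  moreover have "pucci_minus lam Lam (mat (-c) :: real^'n^'n) = Lam * (real CARD('n) * (-c))"
    using c by (intro pucci_minus_mat) simp
  ultimately show ?thesis by (simp add: algebra_simps)
qed

lemma sym0: "sym_matrix (0 :: real^'n^'n)"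
  by (simp add: sym_matrix_def transpose_def vec_eq_iff)

lemma Hpos:
  assumes "z \<noteq> 0" "\<forall>x. a x \<ge> 0"
  shows "0 < Hfun p q a x z"
proof -
  have "0 < norm z powr p" using assms(1) by simp
  moreover have "0 \<le> a x * norm z powr q" using assms(2) by simp
  ultimately show ?thesis unfolding Hfun_def by linarith
qed

lemma neg_mv: "(- A) *v v = - (A *v (v::real^'n))"
  by (simp add: matrix_vector_mult_def vec_eq_iff sum_negf)

lemma sym_neg: "sym_matrix A \<Longrightarrow> sym_matrix (- A :: real^'n^'n)"
  by (simp add: sym_matrix_def transpose_def vec_eq_iff)

lemma quad_neg: "quad (-c) (-b) (-A) z x = - quad c b A z x"
  by (simp add: quad_def neg_mv)

lemma open_hb: "open (half_ball k r)"
proof -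
  have "half_ball k r = ball 0 r \<inter> {x. x$k > 0}" by (auto simp: half_ball_def)
  thus ?thesis by (simp add: open_Int open_halfspace_component_gt_cart)
qed

theorem lemma2p4:
  fixes k :: "'n::finite" and r lam Lam p q :: real
    and F :: "real^'n^'n \<Rightarrow> real" and a :: "real^'n \<Rightarrow> real"
    and xi :: "real^'n" and beta :: "real^'n \<Rightarrow> real^'n" and g u :: "real^'n \<Rightarrow> real"
  assumes "A1 lam Lam F"
    and "0 < p" and "p \<le> q"
    and "continuous_on UNIV a" and "\<forall>x. a x \<ge> 0"
    and "r > 0"
    and "continuous_on (flat_part k r) beta" and "continuous_on (flat_part k r) g"
    and "visc_sol k r (\<lambda>x z M. Hfun p q a x (z - xi) * F M) beta g u"
  shows "visc_sol k r (\<lambda>x z M. F M) beta g u"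
proof -
  note A = assms(1) and apos = assms(5)
  have F0: "F 0 = 0" using A by (simp add: A1_def)
  define K where "K = Lam * real CARD('n)"
  define Om where "Om = half_ball k r"
  have Om: "open Om" by (simp add: Om_def open_hb)
  have cont: "continuous_on (half_ball k r \<union> flat_part k r) u"
    and sub: "visc_sub k r (\<lambda>x z M. Hfun p q a x (z - xi) * F M) beta g u"
    and sup: "visc_super k r (\<lambda>x z M. Hfun p q a x (z - xi) * F M) beta g u"
    using assms(9) by (auto simp: visc_sol_def)
  have uc: "continuous_on Om u" using cont by (rule continuous_on_subset) (auto simp: Om_def)
  have new_sub: "visc_sub k r (\<lambda>x z M. F M) beta g u"
    unfolding visc_sub_def
  proof (intro allI impI)
    fix phi Dphi D2phi S x0
    assume H: "C2_on_with phi Dphi D2phi S \<and> x0 \<in> S \<and> x0 \<in> half_ball k r \<union> flat_part k r \<and>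
        u x0 = phi x0 \<and> (\<forall>x\<in>S \<inter> (half_ball k r \<union> flat_part k r). u x \<le> phi x)"
    hence old: "(x0 \<in> half_ball k r \<longrightarrow> 0 \<le> Hfun p q a x0 (Dphi x0 - xi) * F (D2phi x0)) \<and>
        (x0 \<in> flat_part k r \<longrightarrow> g x0 \<le> beta x0 \<bullet> Dphi x0)"
      using sub unfolding visc_sub_def by blast
    from H have S: "open S" "x0 \<in> S" and D1: "\<forall>x\<in>S. (phi has_derivative (\<lambda>h. Dphi x \<bullet> h)) (at x)"
      and D2: "(Dphi has_derivative (\<lambda>h. D2phi x0 *v h)) (at x0)"
      and touch: "u x0 = phi x0" "\<forall>x\<in>S \<inter> Om. u x \<le> phi x"
      by (auto simp: C2_on_with_def Om_def)
    show "(x0 \<in> half_ball k r \<longrightarrow> 0 \<le> F (D2phi x0)) \<and> (x0 \<in> flat_part k r \<longrightarrow> g x0 \<le> beta x0 \<bullet> Dphi x0)"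
    proof (intro conjI impI)
      assume "x0 \<in> flat_part k r" thus "g x0 \<le> beta x0 \<bullet> Dphi x0" using old by blast
    next
      assume x0: "x0 \<in> half_ball k r"
      show "0 \<le> F (D2phi x0)"
      proof (cases "Dphi x0 = xi")
        case False
        hence "0 < Hfun p q a x0 (Dphi x0 - xi)" by (intro Hpos[OF _ apos]) simp
        thus ?thesis using old x0 by (simp add: zero_le_mult_iff)
      next
        case True
        show ?thesis
        proof (rule core[OF Om uc _ _ _ S _ touch D1 D2 True hess_sym[OF S D1 D2], where K = K])
          show "x0 \<in> Om" using x0 by (simp add: Om_def)
          show "\<And>A. sym_matrix A \<Longrightarrow> psd A \<Longrightarrow> 0 \<le> F A"
            using F_mono[OF A, of _ 0] F0 sym0 by simp
          show "\<And>X c. sym_matrix X \<Longrightarrow> c > 0 \<Longrightarrow> F (X + mat c) - K * c \<le> F X"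
            using F_shift[OF A] by (simp add: K_def)
        next
          fix c b A z y T
          assume sA: "sym_matrix A" and T: "open T" "T \<subseteq> Om" "y \<in> T"
            and t1: "u y = quad c b A z y" and t2: "\<forall>x\<in>T. u x \<le> quad c b A z x"
            and ne: "b + A *v (y - z) \<noteq> xi"
          have "C2_on_with (quad c b A z) (\<lambda>x. b + A *v (x - z)) (\<lambda>x. A) T \<and> y \<in> T \<and>
              y \<in> half_ball k r \<union> flat_part k r \<and> u y = quad c b A z y \<and>
              (\<forall>x\<in>T \<inter> (half_ball k r \<union> flat_part k r). u x \<le> quad c b A z x)"
            using quad_C2[OF sA T(1)] T t1 t2 by (auto simp: Om_def)
          hence "y \<in> half_ball k r \<longrightarrow> 0 \<le> Hfun p q a y (b + A *v (y - z) - xi) * F A"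
            using sub unfolding visc_sub_def by blast
          moreover have "y \<in> half_ball k r" using T by (auto simp: Om_def)
          moreover have "0 < Hfun p q a y (b + A *v (y - z) - xi)" using ne by (intro Hpos[OF _ apos]) simp
          ultimately show "0 \<le> F A" by (simp add: zero_le_mult_iff)
        qed
      qed
    qed
  qed
  have new_sup: "visc_super k r (\<lambda>x z M. F M) beta g u"
    unfolding visc_super_def
  proof (intro allI impI)
    fix phi Dphi D2phi S x0
    assume H: "C2_on_with phi Dphi D2phi S \<and> x0 \<in> S \<and> x0 \<in> half_ball k r \<union> flat_part k r \<and>
        u x0 = phi x0 \<and> (\<forall>x\<in>S \<inter> (half_ball k r \<union> flat_part k r). phi x \<le> u x)"
    hence old: "(x0 \<in> half_ball k r \<longrightarrow> Hfun p q a x0 (Dphi x0 - xi) * F (D2phi x0) \<le> 0) \<and>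
        (x0 \<in> flat_part k r \<longrightarrow> beta x0 \<bullet> Dphi x0 \<le> g x0)"
      using sup unfolding visc_super_def by blast
    from H have S: "open S" "x0 \<in> S" and D1: "\<forall>x\<in>S. (phi has_derivative (\<lambda>h. Dphi x \<bullet> h)) (at x)"
      and D2: "(Dphi has_derivative (\<lambda>h. D2phi x0 *v h)) (at x0)"
      and touch: "u x0 = phi x0" "\<forall>x\<in>S \<inter> Om. phi x \<le> u x"
      by (auto simp: C2_on_with_def Om_def)
    show "(x0 \<in> half_ball k r \<longrightarrow> F (D2phi x0) \<le> 0) \<and> (x0 \<in> flat_part k r \<longrightarrow> beta x0 \<bullet> Dphi x0 \<le> g x0)"
    proof (intro conjI impI)
      assume "x0 \<in> flat_part k r" thus "beta x0 \<bullet> Dphi x0 \<le> g x0" using old by blast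
    next
      assume x0: "x0 \<in> half_ball k r"
      show "F (D2phi x0) \<le> 0"
      proof (cases "Dphi x0 = xi")
        case False
        hence "0 < Hfun p q a x0 (Dphi x0 - xi)" by (intro Hpos[OF _ apos]) simp
        thus ?thesis using old x0 by (simp add: mult_le_0_iff)
      next
        case True
        have sM: "sym_matrix (D2phi x0)" by (rule hess_sym[OF S D1 D2])
        have uc': "continuous_on Om (\<lambda>x. - u x)" using uc by (intro continuous_intros)
        have touch': "- u x0 = - phi x0" "\<forall>x\<in>S \<inter> Om. - u x \<le> - phi x" using touch by auto
        have D1': "\<forall>x\<in>S. ((\<lambda>x. - phi x) has_derivative (\<lambda>h. (- Dphi x) \<bullet> h)) (at x)"
        proof
          fix x assume "x \<in> S"
          hence "((\<lambda>x. - phi x) has_derivative (\<lambda>h. - (Dphi x \<bullet> h))) (at x)"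
            using D1 by (auto intro: has_derivative_minus)
          thus "((\<lambda>x. - phi x) has_derivative (\<lambda>h. (- Dphi x) \<bullet> h)) (at x)" by simp
        qed
        have D2': "((\<lambda>x. - Dphi x) has_derivative (\<lambda>h. (- D2phi x0) *v h)) (at x0)"
          using has_derivative_minus[OF D2] by (simp add: neg_mv)
        have "0 \<le> - F (- (- D2phi x0))"
        proof (rule core[OF Om uc' _ _ _ S _ touch' D1' D2' _ sym_neg[OF sM], where K = K and xi = "- xi"
                   and G = "\<lambda>X. - F (- X)"])
          show "x0 \<in> Om" using x0 by (simp add: Om_def)
          show "- Dphi x0 = - xi" using True by simp
          show "\<And>A. sym_matrix A \<Longrightarrow> psd A \<Longrightarrow> 0 \<le> - F (- A)"
          proof -
            fix A :: "real^'n^'n" assume "sym_matrix A" "psd A"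
            thus "0 \<le> - F (- A)" using F_mono[OF A, of 0 "- A"] F0 sym_neg[of A] sym0 by simp
          qed
          show "\<And>X c. sym_matrix X \<Longrightarrow> c > 0 \<Longrightarrow> - F (- (X + mat c)) - K * c \<le> - F (- X)"
          proof -
            fix X :: "real^'n^'n" and c :: real assume sX: "sym_matrix X" and c: "c > 0"
            have sY: "sym_matrix (- X - mat c)" using sym_add[OF sym_neg[OF sX] sym_neg[OF sym_mat[of c]]] by simp
            have "F (- X - mat c + mat c) - K * c \<le> F (- X - mat c)"
              using F_shift[OF A sY c] by (simp add: K_def)
            thus "- F (- (X + mat c)) - K * c \<le> - F (- X)" by (simp add: algebra_simps)
          qed
        next
          fix c b A z y T
          assume sA: "sym_matrix A" and T: "open T" "T \<subseteq> Om" "y \<in> T"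
            and t1: "- u y = quad c b A z y" and t2: "\<forall>x\<in>T. - u x \<le> quad c b A z x"
            and ne: "b + A *v (y - z) \<noteq> - xi"
          have "C2_on_with (quad (-c) (-b) (-A) z) (\<lambda>x. - b + (- A) *v (x - z)) (\<lambda>x. - A) T \<and> y \<in> T \<and>
              y \<in> half_ball k r \<union> flat_part k r \<and> u y = quad (-c) (-b) (-A) z y \<and>
              (\<forall>x\<in>T \<inter> (half_ball k r \<union> flat_part k r). quad (-c) (-b) (-A) z x \<le> u x)"
          proof (intro conjI)
            show "C2_on_with (quad (-c) (-b) (-A) z) (\<lambda>x. - b + (- A) *v (x - z)) (\<lambda>x. - A) T"
              by (rule quad_C2[OF sym_neg[OF sA] T(1)])
          qed (use T t1 t2 in \<open>auto simp: Om_def quad_neg\<close>)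
          hence "y \<in> half_ball k r \<longrightarrow> Hfun p q a y (- b + (- A) *v (y - z) - xi) * F (- A) \<le> 0"
            using sup unfolding visc_super_def by blast
          moreover have "y \<in> half_ball k r" using T by (auto simp: Om_def)
          moreover have "- b + (- A) *v (y - z) - xi \<noteq> 0"
          proof
            assume "- b + (- A) *v (y - z) - xi = 0"
            hence "b + A *v (y - z) = - xi" by (simp add: neg_mv algebra_simps)
            thus False using ne by simp
          qed
          hence "0 < Hfun p q a y (- b + (- A) *v (y - z) - xi)" by (intro Hpos[OF _ apos])
          ultimately show "0 \<le> - F (- A)" by (simp add: mult_le_0_iff)
        qed
        thus ?thesis by simp
      qed
    qed
  qed
  show ?thesis unfolding visc_sol_def using cont new_sub new_sup by blast
qed


end
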